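(* In the multi-parameter setting described in the context, if there is a POVM $\{M_m\}$ with $F_M(\theta)=C_\Upsilon(\theta)$, then the channel satisfies $\langle w_j^{(l)}(\theta)|w_k(\theta)\rangle=0$ for all $j,k,l$ with $p_j(\theta),p_k(\theta)>0$, and there exists a POVM $\{M_m\}$ and real numbers $\xi_m^{(j)}(\theta)$ such that $M_m^{1/2}\lambda^{(j)}\rho_{out}^{1/2}=\xi_m^{(j)}(\theta)M_m^{1/2}\rho_{out}^{1/2}$ for all $m,j$.
   Context: A multi-parameter quantum channel on density matrices on $\mathbb{C}^d$ is $\rho_0\mapsto\sum_kE_k(\theta)\rho_0E_k(\theta)^\dagger$ with $\theta=(\theta^1,\dots,\theta^m)\in\mathbb{R}^m$, Kraus operators differentiable, $\sum_kE_k^\dagger E_k=I$. The input is a fixed pure state $\rho_0=|\psi_0\rangle\langle\psi_0|$. Canonical Kraus operators $\{\Upsilon_k(\theta)\}_{k=1}^d$: a differentiable Kraus representation of the same channel with $\mathrm{tr}\{\Upsilon_k\rho_0\Upsilon_j^\dagger\}=\delta_{jk}p_k(\theta)$; the output is $\rho_{out}(\theta)=\sum_kp_k|w_k\rangle\langle w_k|$ with $\{|w_k(\theta)\rangle\}$ an orthonormal basis differentiable in $\theta$ and $|w_k\rangle=p_k^{-1/2}\Upsilon_k|\psi_0\rangle$ when $p_k>0$. Write $X^{(j)}=\partial X/\partial\theta^j$. $C_\Upsilon(\theta)_{jk}=4\sum_l\mathrm{Re}\,\mathrm{tr}\{\Upsilon_l^{(j)}\rho_0\Upsilon_l^{(k)\dagger}\}$.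 $\lambda^{(j)}$ is a self-adjoint solution of $\partial\rho_{out}/\partial\theta^j=\frac12(\rho_{out}\lambda^{(j)}+\lambda^{(j)}\rho_{out})$. For a POVM $\{M_m\}$ with $p(m;\theta)=\mathrm{tr}\{\rho_{out}M_m\}$, the Fisher information matrix is $F_M(\theta)_{jk}=\sum_m p(m;\theta)^{-1}\partial_jp(m;\theta)\,\partial_kp(m;\theta)$. *)

theory Defs
  imports "HOL-Analysis.Analysis"
begin

type_synonym ('d) cmat = "complex ^ 'd ^ 'd"

definition cinner :: "complex ^ 'd \<Rightarrow> complex ^ 'd \<Rightarrow> complex" where
  "cinner a b = (\<Sum>i\<in>UNIV. cnj (a $ i) * b $ i)"

definition outer :: "complex ^ 'd \<Rightarrow> complex ^ 'd \<Rightarrow> complex ^ 'd ^ 'd" where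
  "outer a b = (\<chi> i j. a $ i * cnj (b $ j))"

definition adj :: "complex ^ 'd ^ 'd \<Rightarrow> complex ^ 'd ^ 'd" where
  "adj A = (\<chi> i j. cnj (A $ j $ i))"

definition mtrace :: "complex ^ 'd ^ 'd \<Rightarrow> complex" where
  "mtrace A = (\<Sum>i\<in>UNIV. A $ i $ i)"

definition psd :: "complex ^ 'd ^ 'd \<Rightarrow> bool" where
  "psd A \<longleftrightarrow> adj A = A \<and> (\<forall>x. 0 \<le> Re (cinner x (A *v x)))"

definition msqrt :: "complex ^ 'd ^ 'd \<Rightarrow> complex ^ 'd ^ 'd" where
  "msqrt A = (THE S. psd S \<and> S ** S = A)"

definition povm :: "('o::finite \<Rightarrow> complex ^ 'd ^ 'd) \<Rightarrow> bool" where
  "povm M \<longleftrightarrow> (\<forall>m. psd (M m)) \<and> (\<Sum>m\<in>UNIV. M m) = mat 1"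

definition pd :: "(real ^ 'p \<Rightarrow> 'v::real_normed_vector) \<Rightarrow> 'p \<Rightarrow> real ^ 'p \<Rightarrow> 'v" where
  "pd f j \<theta> = vector_derivative (\<lambda>t. f (\<theta> + t *\<^sub>R axis j 1)) (at 0)"

definition channel :: "('k::finite \<Rightarrow> complex ^ 'd ^ 'd) \<Rightarrow> complex ^ 'd ^ 'd \<Rightarrow> complex ^ 'd ^ 'd" where
  "channel E \<rho> = (\<Sum>k\<in>UNIV. E k ** \<rho> ** adj (E k))"

definition kraus :: "('k::finite \<Rightarrow> complex ^ 'd ^ 'd) \<Rightarrow> bool" where
  "kraus E \<longleftrightarrow> (\<Sum>k\<in>UNIV. adj (E k) ** E k) = mat 1"

text \<open>Outcome probability p(m;theta) = tr(rho_out M_m) (real since both are Hermitian).\<close>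
definition outprob :: "complex ^ 'd ^ 'd \<Rightarrow> complex ^ 'd ^ 'd \<Rightarrow> real" where
  "outprob \<rho> M = Re (mtrace (\<rho> ** M))"

text \<open>Classical Fisher information matrix F_M(theta) (terms with p = 0 contribute 0,
  by the convention x / 0 = 0).\<close>
definition fisher :: "(real ^ 'p \<Rightarrow> complex ^ 'd ^ 'd) \<Rightarrow> ('o::finite \<Rightarrow> complex ^ 'd ^ 'd)
    \<Rightarrow> real ^ 'p \<Rightarrow> 'p \<Rightarrow> 'p \<Rightarrow> real" where
  "fisher \<rho> M \<theta> j k = (\<Sum>m\<in>UNIV.
      pd (\<lambda>t. outprob (\<rho> t) (M m)) j \<theta> * pd (\<lambda>t. outprob (\<rho> t) (M m)) k \<theta>
        / outprob (\<rho> \<theta>) (M m))"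

definition CUps :: "('d \<Rightarrow> real ^ 'p \<Rightarrow> complex ^ 'd ^ 'd) \<Rightarrow> complex ^ 'd ^ 'd
    \<Rightarrow> real ^ 'p \<Rightarrow> 'p \<Rightarrow> 'p \<Rightarrow> real" where
  "CUps U \<rho>0 \<theta> j k = 4 * (\<Sum>l\<in>UNIV. Re (mtrace (pd (U l) j \<theta> ** \<rho>0 ** adj (pd (U l) k \<theta>))))"

end

theory Submission
  imports Defs
begin


lemma cinner_zero_left[simp]: "cinner 0 c = 0" by (simp add: cinner_def)
lemma cinner_zero_right[simp]: "cinner c 0 = 0" by (simp add: cinner_def)
lemma cscale: "r *\<^sub>R (z::complex) = of_real r * z" by (simp add: scaleR_conv_of_real)

lemma cinner_add_left: "cinner (a + b) c = cinner a c + cinner b c"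
  by (simp add: cinner_def sum.distrib distrib_right)
lemma cinner_add_right: "cinner c (a + b) = cinner c a + cinner c b"
  by (simp add: cinner_def sum.distrib distrib_left)
lemma cinner_diff_left: "cinner (a - b) c = cinner a c - cinner b c"
  by (simp add: cinner_def sum_subtractf left_diff_distrib)
lemma cinner_diff_right: "cinner c (a - b) = cinner c a - cinner c b"
  by (simp add: cinner_def sum_subtractf right_diff_distrib)
lemma cinner_scaleR_left: "cinner (r *\<^sub>R a) c = of_real r * cinner a c"
  by (simp add: cinner_def sum_distrib_left cscale mult.assoc)
lemma cinner_scaleR_right: "cinner c (r *\<^sub>R a) = of_real r * cinner c a"
  by (simp add: cinner_def sum_distrib_left cscale mult_ac)
lemma cinner_smult_left: "cinner (z *s a) c = cnj z * cinner a c"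
  by (simp add: cinner_def sum_distrib_left vector_scalar_mult_def mult.assoc)
lemma cinner_smult_right: "cinner c (z *s a) = z * cinner c a"
  by (simp add: cinner_def sum_distrib_left vector_scalar_mult_def mult_ac)
lemma cinner_sum_left: "cinner (\<Sum>i\<in>I. f i) c = (\<Sum>i\<in>I. cinner (f i) c)"
  by (induct I rule: infinite_finite_induct) (simp_all add: cinner_add_left)
lemma cinner_sum_right: "cinner c (\<Sum>i\<in>I. f i) = (\<Sum>i\<in>I. cinner c (f i))"
  by (induct I rule: infinite_finite_induct) (simp_all add: cinner_add_right)
lemma cnj_cinner: "cnj (cinner x y) = cinner y x"
  by (simp add: cinner_def mult.commute)
lemma cinner_adj: "cinner x (A *v y) = cinner (adj A *v x) y"
proof -
  have "cinner x (A *v y) = (\<Sum>i\<in>UNIV. \<Sum>j\<in>UNIV. cnj (x$i) * A$i$j * y$j)"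
    by (simp add: cinner_def matrix_vector_mult_def sum_distrib_left mult.assoc)
  also have "\<dots> = (\<Sum>j\<in>UNIV. \<Sum>i\<in>UNIV. cnj (x$i) * A$i$j * y$j)"
    by (rule sum.swap)
  also have "\<dots> = cinner (adj A *v x) y"
    by (simp add: cinner_def adj_def matrix_vector_mult_def sum_distrib_right sum_distrib_left mult_ac)
  finally show ?thesis .
qed
lemma Re_cinner: "Re (cinner x y) = inner x y"
  by (simp add: cinner_def inner_vec_def inner_complex_def Re_sum)
lemma cinner_self: "cinner x x = of_real ((norm x)\<^sup>2)"
proof -
  have "cinner x x = (\<Sum>i\<in>UNIV. of_real ((cmod (x$i))\<^sup>2))"
    unfolding cinner_def by (intro sum.cong) (auto simp: complex_norm_square[symmetric] mult.commute)
  also have "\<dots> = of_real (\<Sum>i\<in>UNIV. (cmod (x$i))\<^sup>2)" by simp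
  also have "\<dots> = of_real ((norm x)\<^sup>2)" by (simp add: norm_vec_def L2_set_def sum_nonneg)
  finally show ?thesis .
qed
lemma Re_cinner_self: "Re (cinner x x) = (norm x)\<^sup>2" by (simp add: cinner_self)
lemma cinner_self_eq_0: "cinner x x = 0 \<longleftrightarrow> x = 0" by (simp add: cinner_self)

lemma outer_mult_v: "outer a b *v x = cinner b x *s a"
  by (simp add: outer_def cinner_def matrix_vector_mult_def vector_scalar_mult_def vec_eq_iff
      sum_distrib_left mult_ac)
lemma mult_outer: "A ** outer a b = outer (A *v a) b"
  by (simp add: outer_def matrix_matrix_mult_def matrix_vector_mult_def vec_eq_iff
      sum_distrib_right sum_distrib_left ac_simps)
lemma outer_mult_adj: "outer a b ** adj B = outer a (B *v b)"
  by (simp add: outer_def adj_def matrix_matrix_mult_def matrix_vector_mult_def vec_eq_iff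
      sum_distrib_left sum_distrib_right mult_ac)
lemma sandwich_outer: "A ** outer a b ** adj B = outer (A *v a) (B *v b)"
  by (simp add: mult_outer outer_mult_adj)
lemma mtrace_outer: "mtrace (outer a b) = cinner b a"
  by (simp add: mtrace_def outer_def cinner_def mult.commute)
lemma adj_adj[simp]: "adj (adj A) = A" by (simp add: adj_def vec_eq_iff)
lemma adj_outer: "adj (outer a b) = outer b a" by (simp add: adj_def outer_def vec_eq_iff)
lemma adj_add: "adj (A + B) = adj A + adj B" by (simp add: adj_def vec_eq_iff)
lemma adj_sum: "adj (\<Sum>i\<in>I. f i) = (\<Sum>i\<in>I. adj (f i))"
  by (induct I rule: infinite_finite_induct) (auto simp: adj_add, simp_all add: adj_def vec_eq_iff)
lemma adj_scaleR: "adj (r *\<^sub>R A) = r *\<^sub>R adj A" by (simp add: adj_def vec_eq_iff)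
lemma adj_mult: "adj (A ** B) = adj B ** adj A"
  by (simp add: adj_def matrix_matrix_mult_def vec_eq_iff mult.commute)
lemma mtrace_outer_mult: "mtrace (outer a b ** M) = cinner b (M *v a)"
proof -
  have "outer a b ** M = outer a (adj M *v b)"
    using outer_mult_adj[of a b "adj M"] by simp
  then show ?thesis by (simp add: mtrace_outer cinner_adj)
qed
lemma mtrace_add: "mtrace (A + B) = mtrace A + mtrace B" by (simp add: mtrace_def sum.distrib)
lemma mtrace_sum: "mtrace (\<Sum>i\<in>I. f i) = (\<Sum>i\<in>I. mtrace (f i))"
  by (induct I rule: infinite_finite_induct) (auto simp: mtrace_add, simp_all add: mtrace_def)
lemma mv_smult: "(A::complex^'n^'m) *v (c *s x) = c *s (A *v x)"
  unfolding matrix_vector_mult_def vector_scalar_mult_def vec_eq_iff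
  by (auto simp: sum_distrib_left intro!: sum.cong)
lemma mv_scaleR: "(A::complex^'n^'m) *v (r *\<^sub>R x) = r *\<^sub>R (A *v x)"
  by (simp add: matrix_vector_mult_def vec_eq_iff cscale sum_distrib_left mult_ac)
lemma mv_sum: "(A::complex^'n^'m) *v (\<Sum>i\<in>I. f i) = (\<Sum>i\<in>I. A *v f i)"
  by (induct I rule: infinite_finite_induct) (auto simp: matrix_vector_right_distrib)
lemma sum_mv: "(\<Sum>i\<in>I. f i) *v (x::complex^'n) = (\<Sum>i\<in>I. f i *v x)"
  by (induct I rule: infinite_finite_induct) (auto simp: matrix_vector_mult_add_rdistrib)
lemma scaleR_mv: "(r *\<^sub>R A) *v (x::complex^'n) = r *\<^sub>R (A *v x)"
  by (simp add: matrix_vector_mult_def vec_eq_iff cscale sum_distrib_left mult_ac)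
lemma hermitian_cinner: "adj A = A \<Longrightarrow> cinner x (A *v y) = cinner (A *v x) y"
  by (metis cinner_adj)
lemma hermitian_inner: "adj A = A \<Longrightarrow> inner x (A *v y) = inner (A *v x) y"
  by (metis cinner_adj Re_cinner)
lemma smult_scaleR: "of_real r *s x = r *\<^sub>R (x::complex^'n)"
  by (simp add: vector_scalar_mult_def cscale vec_eq_iff)
lemma smult_add: "(a + b) *s x = a *s x + b *s (x::complex^'n)"
  by (simp add: vector_scalar_mult_def vec_eq_iff distrib_right)
lemma smult_one[simp]: "1 *s x = (x::complex^'n)"
  by (simp add: vector_scalar_mult_def vec_eq_iff)
lemma smult_zero[simp]: "0 *s x = (0::complex^'n)" "c *s (0::complex^'n) = 0"
  by (simp_all add: vector_scalar_mult_def vec_eq_iff)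
lemma matrix_eq_on_all: "(\<And>x. (A::complex^'n^'m) *v x = B *v x) \<Longrightarrow> A = B"
  using matrix_eq by blast

lemma bilinear_cinner: "bounded_bilinear cinner"
proof -
  have "bilinear cinner"
    unfolding bilinear_def linear_iff
    by (auto simp: cinner_add_left cinner_add_right cinner_scaleR_left cinner_scaleR_right
        cscale)
  then show ?thesis by (simp add: bilinear_conv_bounded_bilinear)
qed
lemma bilinear_outer: "bounded_bilinear outer"
proof -
  have "bilinear outer"
    unfolding bilinear_def linear_iff
    by (auto simp: outer_def vec_eq_iff distrib_left distrib_right cscale mult_ac)
  then show ?thesis by (simp add: bilinear_conv_bounded_bilinear)
qed
lemma blin_mv_right: "bounded_linear (\<lambda>x. (A::complex^'n^'m) *v x)"
  by (simp add: linear_conv_bounded_linear)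
lemma blin_mv_left: "bounded_linear (\<lambda>X. (X::complex^'n^'m) *v x)"
proof -
  have "linear (\<lambda>X. (X::complex^'n^'m) *v x)"
    unfolding linear_iff by (auto simp: matrix_vector_mult_add_rdistrib scaleR_mv)
  then show ?thesis by (simp add: linear_conv_bounded_linear)
qed



definition onset :: "(complex^'d) set \<Rightarrow> bool" where
  "onset S \<longleftrightarrow> (\<forall>a\<in>S. \<forall>b\<in>S. cinner a b = (if a = b then 1 else 0))"

lemma smult_decomp: "c *s b = Re c *\<^sub>R b + Im c *\<^sub>R (\<i> *s (b::complex^'d))"
  by (simp add: vector_scalar_mult_def vec_eq_iff cscale complex_eq_iff)

lemma onset_aux:
  assumes "onset S" "finite S"
  defines "T \<equiv> S \<union> (\<lambda>b. \<i> *s b) ` S"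
  shows "independent T" "card T = 2 * card S"
proof -
  have ip: "inner a (\<i> *s b) = 0" if "a \<in> S" "b \<in> S" for a b
    using assms(1) that by (simp add: Re_cinner[symmetric] cinner_smult_right onset_def)
  have ii: "inner (\<i> *s a) (\<i> *s b) = inner a b" for a b :: "complex^'d"
    by (simp add: Re_cinner[symmetric] cinner_smult_right cinner_smult_left)
  have n1: "inner a a = 1" if "a \<in> S" for a
    using assms(1) that by (simp add: Re_cinner[symmetric] onset_def)
  have o: "inner a b = 0" if "a \<in> S" "b \<in> S" "a \<noteq> b" for a b
    using assms(1) that by (simp add: Re_cinner[symmetric] onset_def)
  have disj: "S \<inter> (\<lambda>b. \<i> *s b) ` S = {}"
proof -
    { fix a b assume ab: "a \<in> S" "b \<in> S" "a = \<i> *s b"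
      then have False using ip[of a b] n1[of a] by simp }
    then show ?thesis by blast
  qed
  have inj: "inj_on (\<lambda>b. \<i> *s b) S"
by (rule inj_onI) (simp add: vector_scalar_mult_def vec_eq_iff)
  show "card T = 2 * card S"
    unfolding T_def using assms(2) disj inj by (simp add: card_Un_disjoint card_image)
  show "independent T"
  proof (rule pairwise_orthogonal_independent)
    show "pairwise orthogonal T"
      unfolding pairwise_def orthogonal_def T_def
proof (intro allI impI ballI)
      fix x y assume xy: "x \<in> S \<union> (\<lambda>b. \<i> *s b) ` S" "y \<in> S \<union> (\<lambda>b. \<i> *s b) ` S" "x \<noteq> y"
      show "inner x y = 0"
      proof (cases "x \<in> S")
        case xS: True
        show ?thesis
        proof (cases "y \<in> S")
          case True then show ?thesis using o xS xy(3) by blast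
        next
          case False then obtain b where "b \<in> S" "y = \<i> *s b" using xy(2) by blast
          then show ?thesis using ip xS by blast
        qed
      next
        case False then obtain a where a: "a \<in> S" "x = \<i> *s a" using xy(1) by blast
        show ?thesis
        proof (cases "y \<in> S")
          case True then show ?thesis using ip[of y a] a by (simp add: inner_commute)
        next
          case False then obtain b where "b \<in> S" "y = \<i> *s b" using xy(2) by blast
          then show ?thesis using ii o a xy(3) by metis
        qed
      qed
    qed
    show "0 \<notin> T"
proof
      assume "0 \<in> T"
      then have "0 \<in> S \<or> (\<exists>b\<in>S. 0 = \<i> *s b)" unfolding T_def by auto
      then show False
      proof
        assume "0 \<in> S" then show False using n1[of 0] by simp
      next
        assume "\<exists>b\<in>S. 0 = \<i> *s b"
        then obtain b where "b \<in> S" "0 = \<i> *s b" by blast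
        then show False using n1[of b] ii[of b b] by simp
      qed
    qed
  qed
qed

lemma onset_card:
  assumes "onset (S::(complex^'d) set)" "finite S"
  shows "card S \<le> CARD('d)"
proof -
  from onset_aux[OF assms] independent_bound
  have "2 * card S \<le> DIM(complex^'d)" by metis
  then show ?thesis by simp
qed

lemma onset_orth:
  assumes "onset (S::(complex^'d) set)" "finite S" "card S < CARD('d)"
  shows "\<exists>x. x \<noteq> 0 \<and> (\<forall>b\<in>S. cinner b x = 0)"
proof -
  define T where "T = S \<union> (\<lambda>b. \<i> *s b) ` S"
  have ind: "independent T" and cT: "card T = 2 * card S"
    using onset_aux[OF assms(1,2)] T_def by auto
  have fT: "finite T" unfolding T_def using assms(2) by simp
  have "span T \<noteq> UNIV"
  proof
    assume "span T = UNIV"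
    then have "dim (UNIV::(complex^'d) set) \<le> card T"
      using dim_le_card[of UNIV T] fT by simp
    then show False using cT assms(3) by simp
  qed
  then obtain x where x: "x \<notin> span T" by blast
  define y where "y = x - (\<Sum>b\<in>S. cinner b x *s b)"
  have "(\<Sum>b\<in>S. cinner b x *s b) \<in> span T"
  proof (rule span_sum)
    fix b assume b: "b \<in> S"
    have "b \<in> span T" "\<i> *s b \<in> span T" using b by (auto simp: T_def intro: span_base)
    then show "cinner b x *s b \<in> span T"
      by (subst smult_decomp) (intro span_add span_scale)
  qed
  then have "y \<noteq> 0" using x unfolding y_def by auto
  moreover have "cinner b' y = 0" if b': "b' \<in> S" for b'
  proof -
    have "cinner b' (\<Sum>b\<in>S. cinner b x *s b) = (\<Sum>b\<in>S. cinner b x * cinner b' b)"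
      by (simp add: cinner_sum_right cinner_smult_right)
    also have "\<dots> = (\<Sum>b\<in>S. if b = b' then cinner b x else 0)"
      using assms(1) b' by (intro sum.cong) (auto simp: onset_def)
    also have "\<dots> = cinner b' x" using b' assms(2) by (simp add: sum.delta')
    finally show ?thesis unfolding y_def by (simp add: cinner_diff_right)
  qed
  ultimately show ?thesis by blast
qed

lemma onset_expand:
  assumes "onset (S::(complex^'d) set)" "finite S" "card S = CARD('d)"
  shows "x = (\<Sum>b\<in>S. cinner b x *s b)"
proof (rule ccontr)
  assume ne: "x \<noteq> (\<Sum>b\<in>S. cinner b x *s b)"
  define y where "y = x - (\<Sum>b\<in>S. cinner b x *s b)"
  have y0: "y \<noteq> 0" using ne unfolding y_def by auto
  have oy: "cinner b' y = 0" if b': "b' \<in> S" for b'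
  proof -
    have "cinner b' (\<Sum>b\<in>S. cinner b x *s b) = (\<Sum>b\<in>S. cinner b x * cinner b' b)"
      by (simp add: cinner_sum_right cinner_smult_right)
    also have "\<dots> = (\<Sum>b\<in>S. if b = b' then cinner b x else 0)"
      using assms(1) b' by (intro sum.cong) (auto simp: onset_def)
    also have "\<dots> = cinner b' x" using b' assms(2) by (simp add: sum.delta')
    finally show ?thesis unfolding y_def by (simp add: cinner_diff_right)
  qed
  define u where "u = (1 / norm y) *\<^sub>R y"
  have nu: "cinner u u = 1" using y0
    by (simp add: u_def cinner_scaleR_left cinner_scaleR_right cinner_self power2_eq_square)
  have ou: "cinner b u = 0" if "b \<in> S" for b
    using oy[OF that] by (simp add: u_def cinner_scaleR_right)
  have ou': "cinner u b = 0" if "b \<in> S" for b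
    using ou[OF that] cnj_cinner by (metis complex_cnj_zero)
  have uS: "u \<notin> S" using nu ou by force
  have "onset (insert u S)"
    using assms(1) nu ou ou' unfolding onset_def by auto
  from onset_card[OF this] assms(2,3) uS show False by simp
qed

lemma herm_real: "adj A = A \<Longrightarrow> cinner x (A *v x) = of_real (inner x (A *v x))"
proof -
  assume h: "adj A = A"
  have "cnj (cinner x (A *v x)) = cinner x (A *v x)"
    by (metis cnj_cinner h hermitian_cinner)
  then have "Im (cinner x (A *v x)) = 0" by (metis Reals_cnj_iff complex_is_Real_iff)
  then show ?thesis by (simp add: complex_eq_iff Re_cinner)
qed

lemma rayleigh_step:
  fixes A :: "complex^'d^'d"
  assumes h: "adj A = A" and S: "onset S" "finite S" "card S < CARD('d)"
    and eig: "\<forall>b\<in>S. \<exists>\<mu>::real. A *v b = \<mu> *\<^sub>R b"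
  shows "\<exists>x. cinner x x = 1 \<and> (\<forall>b\<in>S. cinner b x = 0) \<and> (\<exists>\<mu>::real. A *v x = \<mu> *\<^sub>R x)"
proof -
  define W where "W = {x. \<forall>b\<in>S. cinner b x = 0}"
  have Wadd: "x + y \<in> W" if "x \<in> W" "y \<in> W" for x y
    using that by (auto simp: W_def cinner_add_right)
  have Wsc: "r *\<^sub>R x \<in> W" if "x \<in> W" for x r
    using that by (auto simp: W_def cinner_scaleR_right)
  have WA: "A *v x \<in> W" if "x \<in> W" for x
  proof -
    { fix b assume b: "b \<in> S"
      then obtain \<mu> where "A *v b = \<mu> *\<^sub>R b" using eig by blast
      then have "cinner b (A *v x) = of_real \<mu> * cinner b x"
        by (simp add: hermitian_cinner[OF h] cinner_scaleR_left)
      then have "cinner b (A *v x) = 0" using that b by (simp add: W_def) }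
    then show ?thesis by (simp add: W_def)
  qed
  obtain x1 where x1: "x1 \<noteq> 0" "x1 \<in> W" using onset_orth[OF S] by (auto simp: W_def)
  define K where "K = W \<inter> sphere 0 1"
  have "closed W"
  proof -
    have "W = (\<Inter>b\<in>S. {x. cinner b x = 0})" by (auto simp: W_def)
    moreover have "closed {x. cinner b x = 0}" for b
    proof -
      have "continuous_on UNIV (\<lambda>x. cinner b x)"
        using bounded_bilinear.continuous[OF bilinear_cinner] 
        by (intro continuous_at_imp_continuous_on ballI)
           (auto intro!: bounded_bilinear.continuous[OF bilinear_cinner] continuous_intros)
      then show ?thesis using closed_Collect_eq[of "\<lambda>x. cinner b x" "\<lambda>x. 0"] by auto
    qed
    ultimately show ?thesis by auto
  qed
  then have "compact K" unfolding K_def by (simp add: compact_Int_closed closed_Int_compact)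
  moreover have "(1 / norm x1) *\<^sub>R x1 \<in> K" using x1 Wsc by (simp add: K_def)
  then have "K \<noteq> {}" by blast
  moreover have "continuous_on K (\<lambda>x. inner x (A *v x))"
    by (intro continuous_intros linear_continuous_on) (simp add: blin_mv_right)
  ultimately obtain x0 where x0K: "x0 \<in> K" and mx: "\<And>y. y \<in> K \<Longrightarrow> inner y (A *v y) \<le> inner x0 (A *v x0)"
    using continuous_attains_sup[of K "\<lambda>x. inner x (A *v x)"] by blast
  define \<mu> where "\<mu> = inner x0 (A *v x0)"
  have x0W: "x0 \<in> W" and nx0: "norm x0 = 1" using x0K by (auto simp: K_def)
  have c00: "cinner x0 x0 = 1" using nx0 by (simp add: cinner_self)
  define z where "z = A *v x0 - \<mu> *\<^sub>R x0"
  have zW: "z \<in> W" unfolding z_def using Wadd[OF WA[OF x0W] Wsc[OF x0W, of "-\<mu>"]] by simp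
  have cz: "cinner x0 z = 0" using herm_real[OF h, of x0] c00
    by (simp add: z_def cinner_diff_right cinner_scaleR_right \<mu>_def)
  have iz: "inner x0 z = 0" "inner z x0 = 0" using cz by (simp_all add: Re_cinner[symmetric], metis Re_cinner inner_commute zero_complex.sel(1))
  have "z = 0"
  proof (rule ccontr)
    assume z0: "z \<noteq> 0"
    define n where "n = inner z z"
    have npos: "n > 0" using z0 by (simp add: n_def)
    define bb where "bb = inner z (A *v z) - \<mu> * n"
    define t where "t = n / (\<bar>bb\<bar> + n)"
    have tpos: "t > 0" using npos by (simp add: t_def)
    have tb: "t * \<bar>bb\<bar> < n" using npos
      by (simp add: t_def field_simps)
    define y where "y = x0 + t *\<^sub>R z"
    have Ay: "A *v y = A *v x0 + t *\<^sub>R (A *v z)" by (simp add: y_def matrix_vector_right_distrib mv_scaleR)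
    have izA: "inner z (A *v x0) = n"
    proof -
      have "inner z (A *v x0) = inner z (z + \<mu> *\<^sub>R x0)" by (simp add: z_def)
      then show ?thesis by (simp add: inner_add_right iz n_def)
    qed
    have i0A: "inner x0 (A *v z) = n" using izA hermitian_inner[OF h, of x0 z] by (simp add: inner_commute)
    have fy: "inner y (A *v y) = \<mu> + 2 * t * n + t^2 * inner z (A *v z)"
      unfolding Ay by (simp add: y_def algebra_simps izA i0A \<mu>_def power2_eq_square)
    have ny: "inner y y = 1 + t^2 * n"
    proof -
      have "inner y y = inner x0 x0 + t * inner x0 z + t * inner z x0 + t * t * inner z z"
        by (simp only: y_def inner_add_left inner_add_right inner_scaleR_left inner_scaleR_right) (simp add: algebra_simps)
      moreover have "inner x0 x0 = 1" using nx0 by (simp add: power2_norm_eq_inner[symmetric])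
      ultimately show ?thesis by (simp add: iz n_def power2_eq_square)
    qed
    have ypos: "norm y > 0" using ny npos by (smt (verit) inner_zero_left norm_eq_zero zero_less_norm_iff zero_le_power2 mult_nonneg_nonneg)
    have yW: "y \<in> W" using Wadd[OF x0W Wsc[OF zW]] by (simp add: y_def)
    have "(1 / norm y) *\<^sub>R y \<in> K" using ypos Wsc[OF yW] by (simp add: K_def)
    then have "inner ((1 / norm y) *\<^sub>R y) (A *v ((1 / norm y) *\<^sub>R y)) \<le> \<mu>" using mx \<mu>_def by blast
    then have "inner y (A *v y) / (norm y)^2 \<le> \<mu>" by (simp add: mv_scaleR power2_eq_square)
    then have "inner y (A *v y) \<le> \<mu> * inner y y" using ypos by (simp add: divide_le_eq power2_norm_eq_inner)
    then have "2 * t * n + t^2 * bb \<le> 0" unfolding fy ny bb_def by (simp add: algebra_simps)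
    moreover have "t^2 * \<bar>bb\<bar> < t * n" using tb tpos by (simp add: power2_eq_square)
    moreover have "- (t^2 * \<bar>bb\<bar>) \<le> t^2 * bb"
      using mult_left_mono[of "-\<bar>bb\<bar>" bb "t^2"] by simp
    moreover have "t * n > 0" using tpos npos by simp
    ultimately show False by linarith
  qed
  then have "A *v x0 = \<mu> *\<^sub>R x0" by (simp add: z_def)
  then show ?thesis using c00 x0W by (auto simp: W_def)
qed

lemma spectral_gen:
  fixes A :: "complex^'d^'d"
  assumes h: "adj A = A"
  shows "n \<le> CARD('d) \<Longrightarrow> \<exists>S. finite S \<and> card S = n \<and> onset S \<and> (\<forall>b\<in>S. \<exists>\<mu>::real. A *v b = \<mu> *\<^sub>R b)"
proof (induction n)
  case 0
  then show ?case by (intro exI[of _ "{}"]) (simp add: onset_def)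
next
  case (Suc n)
  then obtain S where S: "finite S" "card S = n" "onset S" "\<forall>b\<in>S. \<exists>\<mu>::real. A *v b = \<mu> *\<^sub>R b" by auto
  obtain x where x: "cinner x x = 1" "\<forall>b\<in>S. cinner b x = 0" "\<exists>\<mu>::real. A *v x = \<mu> *\<^sub>R x"
    using rayleigh_step[OF h S(3,1)] S Suc.prems by auto
  have x': "cinner x b = 0" if "b \<in> S" for b using x(2) that cnj_cinner by (metis complex_cnj_zero)
  have xS: "x \<notin> S" using x by force
  show ?case
    using S x x' xS by (intro exI[of _ "insert x S"]) (auto simp: onset_def)
qed

lemma spectral:
  fixes A :: "complex^'d^'d"
  assumes h: "adj A = A"
  shows "\<exists>S. finite S \<and> card S = CARD('d) \<and> onset S \<and> (\<forall>b\<in>S. \<exists>\<mu>::real. A *v b = \<mu> *\<^sub>R b)"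
  using spectral_gen[OF h] by blast

lemma eq_on_onb:
  fixes X Y :: "complex^'d^'d"
  assumes "onset S" "finite S" "card S = CARD('d)" "\<And>b. b \<in> S \<Longrightarrow> X *v b = Y *v b"
  shows "X = Y"
proof (rule matrix_eq_on_all)
  fix x
  have "X *v x = X *v (\<Sum>b\<in>S. cinner b x *s b)" using onset_expand[OF assms(1-3)] by metis
  also have "\<dots> = (\<Sum>b\<in>S. cinner b x *s (Y *v b))" using assms(4) by (simp add: mv_sum mv_smult)
  also have "\<dots> = Y *v (\<Sum>b\<in>S. cinner b x *s b)" by (simp add: mv_sum mv_smult)
  also have "\<dots> = Y *v x" using onset_expand[OF assms(1-3)] by metis
  finally show "X *v x = Y *v x" .
qed

lemma psd_inner: "psd A \<Longrightarrow> inner x (A *v x) \<ge> 0"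
  by (simp add: psd_def Re_cinner)

lemma sqrt_exists:
  fixes A :: "complex^'d^'d"
  assumes A: "psd A"
  shows "\<exists>R. psd R \<and> R ** R = A"
proof -
  have h: "adj A = A" using A by (simp add: psd_def)
  obtain S where S: "finite S" "card S = CARD('d)" "onset S" and eig: "\<forall>b\<in>S. \<exists>\<mu>::real. A *v b = \<mu> *\<^sub>R b"
    using spectral[OF h] by blast
  obtain mu where mu: "\<And>b. b \<in> S \<Longrightarrow> A *v b = mu b *\<^sub>R b" using eig by metis
  have cbb: "cinner b b' = (if b = b' then 1 else 0)" if "b \<in> S" "b' \<in> S" for b b'
    using S(3) that by (simp add: onset_def)
  have mupos: "mu b \<ge> 0" if "b \<in> S" for b
  proof -
    have "inner b (A *v b) = mu b" using mu[OF that] cbb[OF that that]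
      by (simp add: Re_cinner[symmetric] cinner_scaleR_right)
    then show ?thesis using psd_inner[OF A, of b] by simp
  qed
  define R where "R = (\<Sum>b\<in>S. sqrt (mu b) *\<^sub>R outer b b)"
  have Rv: "R *v x = (\<Sum>b\<in>S. sqrt (mu b) *\<^sub>R (cinner b x *s b))" for x
    by (simp add: R_def sum_mv scaleR_mv outer_mult_v)
  have Rb: "R *v b' = sqrt (mu b') *\<^sub>R b'" if "b' \<in> S" for b'
  proof -
    have "R *v b' = (\<Sum>b\<in>S. if b = b' then sqrt (mu b) *\<^sub>R b else 0)"
      unfolding Rv using that cbb by (intro sum.cong) auto
    then show ?thesis using that S(1) by (simp add: sum.delta')
  qed
  have "R ** R = A"
  proof (rule eq_on_onb[OF S(3,1,2)])
    fix b assume b: "b \<in> S"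
    have "(R ** R) *v b = R *v (R *v b)" by (simp add: matrix_vector_mul_assoc)
    also have "\<dots> = mu b *\<^sub>R b" using b mupos[OF b] by (simp add: Rb mv_scaleR)
    finally show "(R ** R) *v b = A *v b" using mu[OF b] by simp
  qed
  moreover have "psd R"
  proof -
    have "adj R = R" by (simp add: R_def adj_sum adj_scaleR adj_outer)
    moreover have "0 \<le> Re (cinner x (R *v x))" for x
    proof -
      have "Re (cinner x (R *v x)) = (\<Sum>b\<in>S. sqrt (mu b) * Re (cinner b x * cinner x b))"
        by (simp add: Rv cinner_sum_right cinner_scaleR_right cinner_smult_right)
      also have "\<dots> \<ge> 0"
      proof (rule sum_nonneg)
        fix b assume "b \<in> S"
        have "cinner b x * cinner x b = of_real ((cmod (cinner b x))\<^sup>2)"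
          by (metis cnj_cinner complex_norm_square)
        then show "0 \<le> sqrt (mu b) * Re (cinner b x * cinner x b)" using mupos \<open>b \<in> S\<close> by (simp del: of_real_power add: of_real_power[symmetric])
      qed
      finally show ?thesis .
    qed
    ultimately show ?thesis by (simp add: psd_def)
  qed
  ultimately show ?thesis by blast
qed

lemma sqrt_unique:
  fixes S1 S2 :: "complex^'d^'d"
  assumes p1: "psd S1" and p2: "psd S2" and eq: "S1 ** S1 = S2 ** S2"
  shows "S1 = S2"
proof -
  have h1: "adj S1 = S1" and h2: "adj S2 = S2" using p1 p2 by (auto simp: psd_def)
  obtain B where B: "finite B" "card B = CARD('d)" "onset B" and eig: "\<forall>b\<in>B. \<exists>\<mu>::real. S1 *v b = \<mu> *\<^sub>R b"
    using spectral[OF h1] by blast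
  show ?thesis
  proof (rule eq_on_onb[OF B(3,1,2)])
    fix b assume b: "b \<in> B"
    then obtain \<sigma> where sb: "S1 *v b = \<sigma> *\<^sub>R b" using eig by blast
    have bb: "inner b b = 1" using B(3) b by (simp add: onset_def Re_cinner[symmetric])
    have sig: "\<sigma> \<ge> 0" using psd_inner[OF p1, of b] by (simp add: sb bb)
    have SS: "S2 *v (S2 *v b) = (\<sigma>*\<sigma>) *\<^sub>R b"
      by (metis eq matrix_vector_mul_assoc mv_scaleR sb scaleR_scaleR)
    define z where "z = S2 *v b - \<sigma> *\<^sub>R b"
    have zz: "S2 *v z + \<sigma> *\<^sub>R z = 0" by (simp add: z_def SS matrix_vector_mult_diff_distrib mv_scaleR algebra_simps)
    show "S1 *v b = S2 *v b"
    proof (cases "\<sigma> = 0")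
      case True
      then have "S2 *v (S2 *v b) = 0" using SS by simp
      then have "inner (S2 *v b) (S2 *v b) = 0" using hermitian_inner[OF h2, of b "S2 *v b"] by simp
      then show ?thesis using sb True by simp
    next
      case False
      then have sp: "\<sigma> > 0" using sig by simp
      have "inner z (S2 *v z) = - \<sigma> * inner z z" using zz
        by (metis add_eq_0_iff2 inner_minus_right inner_scaleR_right mult_minus_left)
      then have "\<sigma> * inner z z \<le> 0" using psd_inner[OF p2, of z] by simp
      then have "inner z z \<le> 0" using sp by (simp add: mult_le_0_iff)
      then have "z = 0" by (metis inner_eq_zero_iff inner_ge_zero order_antisym)
      then show ?thesis using sb by (simp add: z_def)
    qed
  qed
qed

lemma msqrt_eq: "psd R \<Longrightarrow> R ** R = A \<Longrightarrow> msqrt A = R"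
  unfolding msqrt_def by (rule the_equality) (auto intro: sqrt_unique)

lemma msqrt_psd: "psd A \<Longrightarrow> psd (msqrt A) \<and> msqrt A ** msqrt A = A"
  using sqrt_exists msqrt_eq by metis

lemma psd_null:
  assumes "psd A" "inner x (A *v x) = 0"
  shows "msqrt A *v x = 0" "A *v x = 0"
proof -
  let ?S = "msqrt A"
  have S: "psd ?S" "?S ** ?S = A" using msqrt_psd[OF assms(1)] by auto
  have "inner x (A *v x) = inner (?S *v x) (?S *v x)"
    using hermitian_inner[of ?S x "?S *v x"] S by (simp add: psd_def matrix_vector_mul_assoc)
  then show "?S *v x = 0" using assms(2) by simp
  then show "A *v x = 0" using S by (metis matrix_vector_mul_assoc matrix_vector_mult_0_right)
qed



lemma pd_works:
  assumes "f differentiable (at \<theta>)"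
  shows "((\<lambda>s. f (\<theta> + s *\<^sub>R axis l 1)) has_vector_derivative pd f l \<theta>) (at 0)"
proof -
  have "(f \<circ> (\<lambda>s::real. \<theta> + s *\<^sub>R axis l 1)) differentiable (at 0)"
    by (rule differentiable_chain_at) (auto intro!: derivative_intros simp: assms)
  then show ?thesis by (simp add: pd_def o_def vector_derivative_works)
qed

lemma matrix_add_rdistrib': "((A::complex^'n^'m) + B) ** C = A ** C + B ** C"
  by (vector matrix_matrix_mult_def sum.distrib distrib_right)

lemma sum_matmul: "(\<Sum>i\<in>I. f i) ** (B::complex^'n^'n) = (\<Sum>i\<in>I. f i ** B)"
  by (induct I rule: infinite_finite_induct) (simp_all add: matrix_add_rdistrib')

lemma channel_outer:
  "channel U (outer \<psi> \<psi>) = (\<Sum>k\<in>UNIV. outer (U k *v \<psi>) (U k *v \<psi>))"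
  by (simp add: channel_def sandwich_outer)

lemma rho_mv: "(\<Sum>k\<in>I. outer (v k) (v k)) *v x = (\<Sum>k\<in>I. cinner (v k) x *s v k)"
  by (simp add: sum_mv outer_mult_v)

lemma outprob_eq: "outprob (\<Sum>k\<in>I. outer (v k) (v k)) M = (\<Sum>k\<in>I. inner (v k) (M *v v k))"
  by (simp add: outprob_def sum_matmul mtrace_sum mtrace_outer_mult Re_sum Re_cinner)

lemma povm_sum: "povm M \<Longrightarrow> (\<Sum>m\<in>UNIV. M m *v x) = x"
  by (simp add: povm_def sum_mv[symmetric])

lemma fisher_conseq:
  fixes M :: "'o::finite \<Rightarrow> complex^'d^'d" and v dv :: "'k::finite \<Rightarrow> complex^'d"
  assumes M: "povm M"
    and eq: "(\<Sum>m\<in>UNIV. (2 * a m) * (2 * a m) / P m) = 4 * (\<Sum>k\<in>UNIV. inner (dv k) (dv k))"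
    and a_def: "\<And>m. a m = (\<Sum>k\<in>UNIV. inner (v k) (M m *v dv k))"
    and P_def: "\<And>m. P m = (\<Sum>k\<in>UNIV. inner (v k) (M m *v v k))"
  shows "M m *v (dv k - (a m / P m) *\<^sub>R v k) = 0 \<and> msqrt (M m) *v (dv k - (a m / P m) *\<^sub>R v k) = 0"
proof -
  have psdM: "psd (M m)" for m using M by (simp add: povm_def)
  have hM: "adj (M m) = M m" for m using psdM by (simp add: psd_def)
  define Q where "Q m = (\<Sum>k\<in>UNIV. inner (dv k) (M m *v dv k))" for m
  define g where "g m t = (\<Sum>k\<in>UNIV. inner (dv k - t *\<^sub>R v k) (M m *v (dv k - t *\<^sub>R v k)))" for m t
  have gexp: "g m t = Q m - 2 * t * a m + t^2 * P m" for m t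
  proof -
    have "inner (dv k - t *\<^sub>R v k) (M m *v (dv k - t *\<^sub>R v k))
        = inner (dv k) (M m *v dv k) - 2 * t * inner (v k) (M m *v dv k) + t^2 * inner (v k) (M m *v v k)" for k
    proof -
      have "inner (dv k) (M m *v v k) = inner (v k) (M m *v dv k)"
        using hermitian_inner[OF hM[of m], of "dv k" "v k"] by (simp add: inner_commute)
      then show ?thesis
        by (simp add: matrix_vector_mult_diff_distrib mv_scaleR inner_diff_left inner_diff_right
            algebra_simps power2_eq_square)
    qed
    then show ?thesis
      by (simp add: g_def Q_def a_def P_def sum_subtractf sum.distrib sum_distrib_left)
  qed
  have gnn: "g m t \<ge> 0" for m t unfolding g_def by (intro sum_nonneg psd_inner psdM)
  have Pnn: "P m \<ge> 0" for m unfolding P_def by (intro sum_nonneg psd_inner psdM)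
  have Qnn: "Q m \<ge> 0" for m using gnn[of m 0] gexp[of m 0] by simp
  have le: "(a m)^2 / P m \<le> Q m" for m
  proof (cases "P m = 0")
    case True then show ?thesis using Qnn by simp
  next
    case False
    then have Pp: "P m > 0" using Pnn[of m] by simp
    have "0 \<le> g m (a m / P m)" by (rule gnn)
    also have "g m (a m / P m) = Q m - (a m)^2 / P m"
      using Pp by (simp add: gexp power2_eq_square field_simps)
    finally show ?thesis by simp
  qed
  have QS: "(\<Sum>m\<in>UNIV. Q m) = (\<Sum>k\<in>UNIV. inner (dv k) (dv k))"
  proof -
    have "(\<Sum>m\<in>UNIV. Q m) = (\<Sum>k\<in>UNIV. \<Sum>m\<in>UNIV. inner (dv k) (M m *v dv k))"
      unfolding Q_def by (rule sum.swap)
    also have "\<dots> = (\<Sum>k\<in>UNIV. inner (dv k) (\<Sum>m\<in>UNIV. M m *v dv k))"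
      by (simp add: inner_sum_right)
    also have "\<dots> = (\<Sum>k\<in>UNIV. inner (dv k) (dv k))" using povm_sum[OF M] by simp
    finally show ?thesis .
  qed
  have "(\<Sum>m\<in>UNIV. (a m)^2 / P m) = (\<Sum>m\<in>UNIV. Q m)"
  proof -
    have "(\<Sum>m\<in>UNIV. (2 * a m) * (2 * a m) / P m) = 4 * (\<Sum>m\<in>UNIV. (a m)^2 / P m)"
      by (simp add: sum_distrib_left power2_eq_square)
    then show ?thesis using eq QS by simp
  qed
  then have "(\<Sum>m\<in>UNIV. Q m - (a m)^2 / P m) = 0" by (simp add: sum_subtractf)
  then have eachm: "Q m - (a m)^2 / P m = 0" for m
    using le sum_nonneg_eq_0_iff[of UNIV "\<lambda>m. Q m - (a m)^2 / P m"] by simp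
  have g0: "g m (a m / P m) = 0"
  proof (cases "P m = 0")
    case True then show ?thesis using eachm[of m] by (simp add: gexp)
  next
    case False
    then show ?thesis using eachm[of m] by (simp add: gexp power2_eq_square field_simps)
  qed
  then have "inner (dv k - (a m / P m) *\<^sub>R v k) (M m *v (dv k - (a m / P m) *\<^sub>R v k)) = 0"
    unfolding g_def
    using sum_nonneg_eq_0_iff[of UNIV "\<lambda>k. inner (dv k - (a m / P m) *\<^sub>R v k) (M m *v (dv k - (a m / P m) *\<^sub>R v k))"]
      psd_inner[OF psdM] by simp
  then show ?thesis using psd_null[OF psdM] by blast
qed

theorem lemma11:
  fixes E :: "'k::finite \<Rightarrow> real ^ 'p::finite \<Rightarrow> complex ^ 'd::finite ^ 'd"
    and \<psi>0 :: "complex ^ 'd"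
    and U :: "'d \<Rightarrow> real ^ 'p \<Rightarrow> complex ^ 'd ^ 'd"
    and p :: "'d \<Rightarrow> real ^ 'p \<Rightarrow> real"
    and w :: "'d \<Rightarrow> real ^ 'p \<Rightarrow> complex ^ 'd"
    and \<Lambda> :: "'p \<Rightarrow> complex ^ 'd ^ 'd"
    and M :: "'o::finite \<Rightarrow> complex ^ 'd ^ 'd"
    and \<theta> :: "real ^ 'p"
  assumes E_diff: "\<And>k t. E k differentiable (at t)"
    and E_kraus: "\<And>t. kraus (\<lambda>k. E k t)"
    and psi_norm: "norm \<psi>0 = 1"
    and U_diff: "\<And>k t. U k differentiable (at t)"
    and U_kraus: "\<And>t. kraus (\<lambda>k. U k t)"
    and U_same: "\<And>t \<rho>. channel (\<lambda>k. U k t) \<rho> = channel (\<lambda>k. E k t) \<rho>"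
    and U_canon: "\<And>t j k. mtrace (U k t ** outer \<psi>0 \<psi>0 ** adj (U j t))
                     = (if j = k then complex_of_real (p k t) else 0)"
    and w_diff: "\<And>k t. w k differentiable (at t)"
    and w_onb: "\<And>t j k. cinner (w j t) (w k t) = (if j = k then 1 else 0)"
    and w_def: "\<And>t k. p k t > 0 \<Longrightarrow>
                   w k t = (1 / sqrt (p k t)) *\<^sub>R (U k t *v \<psi>0)"
    and SLD: "\<And>j. adj (\<Lambda> j) = \<Lambda> j"
    and SLD_eq: "\<And>j. pd (\<lambda>t. channel (\<lambda>k. E k t) (outer \<psi>0 \<psi>0)) j \<theta>
                   = (1/2) *\<^sub>R (channel (\<lambda>k. E k \<theta>) (outer \<psi>0 \<psi>0) ** \<Lambda> j
                                 + \<Lambda> j ** channel (\<lambda>k. E k \<theta>) (outer \<psi>0 \<psi>0))"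
    and M_povm: "povm M"
    and F_eq_C: "\<And>j k. fisher (\<lambda>t. channel (\<lambda>k. E k t) (outer \<psi>0 \<psi>0)) M \<theta> j k
                   = CUps U (outer \<psi>0 \<psi>0) \<theta> j k"
  shows "(\<forall>j k l. p j \<theta> > 0 \<and> p k \<theta> > 0 \<longrightarrow> cinner (pd (w j) l \<theta>) (w k \<theta>) = 0)
       \<and> (\<exists>(M' :: 'o \<Rightarrow> complex ^ 'd ^ 'd) \<xi>. povm M' \<and>
            (\<forall>m j. msqrt (M' m) ** \<Lambda> j ** msqrt (channel (\<lambda>k. E k \<theta>) (outer \<psi>0 \<psi>0))
                 = \<xi> m j *\<^sub>R (msqrt (M' m) ** msqrt (channel (\<lambda>k. E k \<theta>) (outer \<psi>0 \<psi>0)))))"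
proof -
  define P0 where "P0 = outer \<psi>0 \<psi>0"
  define v where "v k t = U k t *v \<psi>0" for k t
  define \<gamma> where "\<gamma> l s = \<theta> + s *\<^sub>R axis l 1" for l and s :: real
  have \<gamma>0: "\<gamma> l 0 = \<theta>" for l by (simp add: \<gamma>_def)
  have rho: "channel (\<lambda>k. E k t) P0 = (\<Sum>k\<in>UNIV. outer (v k t) (v k t))" for t
    using U_same[of t P0] channel_outer[of "\<lambda>k. U k t" \<psi>0] by (simp add: P0_def v_def)
  have ccv: "cinner (v j t) (v k t) = (if j = k then complex_of_real (p k t) else 0)" for j k t
    using U_canon[of k t j] by (simp add: v_def sandwich_outer mtrace_outer)
  have pn: "p k t = (norm (v k t))\<^sup>2" for k t
    using ccv[where j=k and k=k and t=t] by (simp add: cinner_self del: of_real_power add: of_real_power[symmetric])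
  have pnn: "p k t \<ge> 0" for k t by (simp add: pn)
  have v0: "p k t = 0 \<Longrightarrow> v k t = 0" for k t by (simp add: pn)
  have vw: "v k t = sqrt (p k t) *\<^sub>R w k t" for k t
  proof (cases "p k t > 0")
    case True then show ?thesis using w_def[OF True] by (simp add: v_def)
  next
    case False then have "p k t = 0" using pnn[of k t] by simp
    then show ?thesis using v0 by simp
  qed
  have ww: "cinner (w k t) (w k t) = 1" for k t using w_onb by simp
  have wwi: "inner (w k t) (w k t) = 1" for k t using ww[of k t] by (simp add: Re_cinner[symmetric])
  define dv where "dv l k = pd (U k) l \<theta> *v \<psi>0" for l k
  have hasV: "((\<lambda>s. v k (\<gamma> l s)) has_vector_derivative dv l k) (at 0)" for l k
    unfolding v_def dv_def \<gamma>_def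
    by (rule bounded_linear.has_vector_derivative[OF blin_mv_left, of "\<lambda>s. U k (\<theta> + s *\<^sub>R axis l 1)"])
       (rule pd_works[OF U_diff])
  define a where "a l m = (\<Sum>k\<in>UNIV. inner (v k \<theta>) (M m *v dv l k))" for l m
  define P where "P m = (\<Sum>k\<in>UNIV. inner (v k \<theta>) (M m *v v k \<theta>))" for m
  define c where "c l m = a l m / P m" for l m
  have psdM: "psd (M m)" for m using M_povm by (simp add: povm_def)
  have hM: "adj (M m) = M m" for m using psdM by (simp add: psd_def)
  have pdout: "pd (\<lambda>t. outprob (channel (\<lambda>k. E k t) (outer \<psi>0 \<psi>0)) (M m)) l \<theta> = 2 * a l m" for l m
  proof -
    have fe: "(\<lambda>s. outprob (channel (\<lambda>k. E k (\<theta> + s *\<^sub>R axis l 1)) (outer \<psi>0 \<psi>0)) (M m))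
        = (\<lambda>s. \<Sum>k\<in>UNIV. inner (v k (\<gamma> l s)) (M m *v v k (\<gamma> l s)))"
      using rho by (simp add: P0_def \<gamma>_def outprob_eq)
    have "((\<lambda>s. \<Sum>k\<in>UNIV. inner (v k (\<gamma> l s)) (M m *v v k (\<gamma> l s))) has_vector_derivative
        (\<Sum>k\<in>UNIV. inner (v k \<theta>) (M m *v dv l k) + inner (dv l k) (M m *v v k \<theta>))) (at 0)"
      apply (rule has_vector_derivative_sum)
      apply (rule has_vector_derivative_eq_rhs)
       apply (rule bounded_bilinear.has_vector_derivative[OF bounded_bilinear_inner hasV
            bounded_linear.has_vector_derivative[OF blin_mv_right hasV]])
      apply (simp add: \<gamma>0)
      done
    moreover have "(\<Sum>k\<in>UNIV. inner (v k \<theta>) (M m *v dv l k) + inner (dv l k) (M m *v v k \<theta>)) = 2 * a l m"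
    proof -
      have "inner (dv l k) (M m *v v k \<theta>) = inner (v k \<theta>) (M m *v dv l k)" for k
        using hermitian_inner[OF hM[of m], of "dv l k" "v k \<theta>"] by (simp add: inner_commute)
      then show ?thesis by (simp add: a_def sum.distrib sum_distrib_left)
    qed
    ultimately show ?thesis unfolding pd_def fe by (simp add: vector_derivative_at)
  qed
  have Cll: "CUps U (outer \<psi>0 \<psi>0) \<theta> l l = 4 * (\<Sum>k\<in>UNIV. inner (dv l k) (dv l k))" for l
    by (simp add: CUps_def dv_def sandwich_outer mtrace_outer Re_cinner)
  have Pm: "outprob (channel (\<lambda>k. E k \<theta>) (outer \<psi>0 \<psi>0)) (M m) = P m" for m
    using rho[of \<theta>] by (simp add: P0_def outprob_eq P_def)
  have key: "M m *v (dv l k - c l m *\<^sub>R v k \<theta>) = 0 \<and> msqrt (M m) *v (dv l k - c l m *\<^sub>R v k \<theta>) = 0" for l m k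
  proof -
    have "(\<Sum>m\<in>UNIV. (2 * a l m) * (2 * a l m) / P m) = 4 * (\<Sum>k\<in>UNIV. inner (dv l k) (dv l k))"
      using F_eq_C[of l l] by (simp add: fisher_def pdout Pm Cll)
    from fisher_conseq[OF M_povm this, of "\<lambda>k. v k \<theta>"] show ?thesis
      by (simp add: a_def P_def c_def)
  qed
  have Mdv: "M m *v dv l k = c l m *\<^sub>R (M m *v v k \<theta>)" for l m k
    using key[of m l k] by (simp add: matrix_vector_mult_diff_distrib mv_scaleR)
  have Sdv: "msqrt (M m) *v dv l k = c l m *\<^sub>R (msqrt (M m) *v v k \<theta>)" for l m k
    using key[of m l k] by (simp add: matrix_vector_mult_diff_distrib mv_scaleR)
  have dvexp: "dv l k = (\<Sum>m\<in>UNIV. c l m *\<^sub>R (M m *v v k \<theta>))" for l k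
    using povm_sum[OF M_povm, of "dv l k"] by (simp add: Mdv)
  have Herm: "cinner (dv l j) (v k \<theta>) = cinner (v j \<theta>) (dv l k)" for l j k
  proof -
    have "cinner (dv l j) (v k \<theta>) = (\<Sum>m\<in>UNIV. of_real (c l m) * cinner (M m *v v j \<theta>) (v k \<theta>))"
      by (subst dvexp) (simp add: cinner_sum_left cinner_scaleR_left)
    also have "\<dots> = (\<Sum>m\<in>UNIV. of_real (c l m) * cinner (v j \<theta>) (M m *v v k \<theta>))"
      using hermitian_cinner[OF hM] by simp
    also have "\<dots> = cinner (v j \<theta>) (dv l k)"
      unfolding dvexp[of l k] by (simp add: cinner_sum_right cinner_scaleR_right)
    finally show ?thesis .
  qed
  have Orth: "cinner (v j \<theta>) (dv l k) = 0 \<and> cinner (dv l j) (v k \<theta>) = 0" if jk: "j \<noteq> k" for l j k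
  proof -
    have "((\<lambda>s. cinner (v j (\<gamma> l s)) (v k (\<gamma> l s))) has_vector_derivative
        (cinner (v j \<theta>) (dv l k) + cinner (dv l j) (v k \<theta>))) (at 0)"
      using bounded_bilinear.has_vector_derivative[OF bilinear_cinner hasV hasV] by (simp add: \<gamma>0)
    moreover have "(\<lambda>s. cinner (v j (\<gamma> l s)) (v k (\<gamma> l s))) = (\<lambda>s. 0)" using ccv jk by simp
    ultimately have "cinner (v j \<theta>) (dv l k) + cinner (dv l j) (v k \<theta>) = 0"
      using vector_derivative_unique_at has_vector_derivative_const by metis
    then show ?thesis using Herm[of l j k] by simp
  qed
  have part1: "cinner (pd (w j) l \<theta>) (w k \<theta>) = 0" if pj: "p j \<theta> > 0" and pk: "p k \<theta> > 0" for j k l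
  proof -
    define W where "W s = w j (\<gamma> l s)" for s
    define dw where "dw = pd (w j) l \<theta>"
    have hasW: "(W has_vector_derivative dw) (at 0)"
      unfolding W_def dw_def \<gamma>_def by (rule pd_works[OF w_diff])
    define \<sigma> where "\<sigma> s = inner (W s) (v j (\<gamma> l s))" for s
    have V\<sigma>: "v j (\<gamma> l s) = \<sigma> s *\<^sub>R W s" for s
    proof -
      have "\<sigma> s = sqrt (p j (\<gamma> l s))" unfolding \<sigma>_def W_def by (subst vw) (simp add: wwi)
      then show ?thesis unfolding W_def by (subst vw) simp
    qed
    define \<sigma>' where "\<sigma>' = inner (W 0) (dv l j) + inner dw (v j \<theta>)"
    have has\<sigma>: "(\<sigma> has_vector_derivative \<sigma>') (at 0)"
      unfolding \<sigma>_def \<sigma>'_def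
      using bounded_bilinear.has_vector_derivative[OF bounded_bilinear_inner hasW hasV[of j l]]
      by (simp add: \<gamma>0)
    have "((\<lambda>s. \<sigma> s *\<^sub>R W s) has_vector_derivative \<sigma> 0 *\<^sub>R dw + \<sigma>' *\<^sub>R W 0) (at 0)"
      by (rule has_vector_derivative_scaleR[OF has\<sigma>[unfolded has_real_derivative_iff_has_vector_derivative[symmetric]] hasW])
    moreover have "(\<lambda>s. \<sigma> s *\<^sub>R W s) = (\<lambda>s. v j (\<gamma> l s))" using V\<sigma> by simp
    ultimately have dvj: "dv l j = \<sigma> 0 *\<^sub>R dw + \<sigma>' *\<^sub>R w j \<theta>"
      using hasV[of j l] vector_derivative_unique_at by (metis W_def \<gamma>0)
    have s0: "\<sigma> 0 = sqrt (p j \<theta>)" unfolding \<sigma>_def W_def \<gamma>0 by (subst vw) (simp add: wwi)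
    have s0p: "\<sigma> 0 > 0" using s0 pj by simp
    have wk: "w k \<theta> = (1 / sqrt (p k \<theta>)) *\<^sub>R v k \<theta>" using w_def[OF pk] by (simp add: v_def)
    have keq: "of_real (\<sigma> 0) * cinner dw (v k \<theta>) = cinner (dv l j) (v k \<theta>) - of_real \<sigma>' * cinner (w j \<theta>) (v k \<theta>)"
      by (simp add: dvj cinner_add_left cinner_scaleR_left)
    have wv: "cinner (w j \<theta>) (v k \<theta>) = of_real (sqrt (p k \<theta>)) * cinner (w j \<theta>) (w k \<theta>)"
      by (subst vw) (simp add: cinner_scaleR_right)
    show ?thesis
    proof (cases "j = k")
      case False
      then have "cinner (dv l j) (v k \<theta>) = 0" using Orth by blast
      moreover have "cinner (w j \<theta>) (v k \<theta>) = 0" using wv w_onb False by simp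
      ultimately have "cinner dw (v k \<theta>) = 0" using keq s0p by simp
      then show ?thesis unfolding wk dw_def[symmetric] by (simp add: cinner_scaleR_right)
    next
      case True
      define z where "z = cinner dw (w j \<theta>)"
      have "((\<lambda>s. cinner (W s) (W s)) has_vector_derivative cinner (W 0) dw + cinner dw (W 0)) (at 0)"
        using bounded_bilinear.has_vector_derivative[OF bilinear_cinner hasW hasW] by simp
      moreover have "(\<lambda>s. cinner (W s) (W s)) = (\<lambda>s. 1)" using ww by (simp add: W_def)
      ultimately have "cinner (W 0) dw + cinner dw (W 0) = 0"
        using vector_derivative_unique_at has_vector_derivative_const by metis
      then have "cnj z + z = 0" unfolding z_def W_def \<gamma>0 by (simp add: cnj_cinner)
      then have rez: "Re z = 0" by (simp add: complex_eq_iff)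
      have r1: "Im (cinner (dv l j) (v j \<theta>)) = 0"
      proof -
        have "cnj (cinner (dv l j) (v j \<theta>)) = cinner (dv l j) (v j \<theta>)"
          using Herm[of l j j] cnj_cinner by metis
        then show ?thesis by (metis Reals_cnj_iff complex_is_Real_iff)
      qed
      have r2: "Im (cinner (w j \<theta>) (v j \<theta>)) = 0" using wv ww True by simp
      have "Im (of_real (\<sigma> 0) * cinner dw (v j \<theta>)) = 0" using keq True r1 r2 by simp
      then have "Im (cinner dw (v j \<theta>)) = 0" using s0p by simp
      then have imz: "Im z = 0" unfolding z_def using w_def[OF pj] by (simp add: cinner_scaleR_right v_def)
      show ?thesis using rez imz True by (simp add: z_def dw_def complex_eq_iff)
    qed
  qed
  define \<rho> where "\<rho> = (\<Sum>k\<in>UNIV. outer (v k \<theta>) (v k \<theta>))"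
  have rho\<theta>: "channel (\<lambda>k. E k \<theta>) (outer \<psi>0 \<psi>0) = \<rho>" using rho[of \<theta>] by (simp add: P0_def \<rho>_def)
  define R0 where "R0 = (\<Sum>k\<in>UNIV. (1 / sqrt (p k \<theta>)) *\<^sub>R outer (v k \<theta>) (v k \<theta>))"
  have R0v: "R0 *v x = (\<Sum>k\<in>UNIV. (1 / sqrt (p k \<theta>)) *\<^sub>R (cinner (v k \<theta>) x *s v k \<theta>))" for x
    by (simp add: R0_def sum_mv scaleR_mv outer_mult_v)
  have rhov: "\<rho> *v x = (\<Sum>k\<in>UNIV. cinner (v k \<theta>) x *s v k \<theta>)" for x
    by (simp add: \<rho>_def rho_mv)
  have R0R0: "R0 ** R0 = \<rho>"
  proof (rule matrix_eq_on_all)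
    fix x
    have ci: "cinner (v j \<theta>) (R0 *v x) = of_real (1 / sqrt (p j \<theta>) * p j \<theta>) * cinner (v j \<theta>) x" for j
    proof -
      have "cinner (v j \<theta>) (R0 *v x) = (\<Sum>k\<in>UNIV. of_real (1 / sqrt (p k \<theta>)) * (cinner (v k \<theta>) x * cinner (v j \<theta>) (v k \<theta>)))"
        by (simp add: R0v cinner_sum_right cinner_scaleR_right cinner_smult_right)
      also have "\<dots> = (\<Sum>k\<in>UNIV. if k = j then of_real (1 / sqrt (p j \<theta>) * p j \<theta>) * cinner (v j \<theta>) x else 0)"
        by (intro sum.cong) (auto simp: ccv)
      finally show ?thesis by simp
    qed
    have "(R0 ** R0) *v x = R0 *v (R0 *v x)" by (simp add: matrix_vector_mul_assoc)
    also have "\<dots> = (\<Sum>j\<in>UNIV. (1 / sqrt (p j \<theta>)) *\<^sub>R ((of_real (1 / sqrt (p j \<theta>) * p j \<theta>) * cinner (v j \<theta>) x) *s v j \<theta>))"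
      by (simp add: R0v[of "R0 *v x"] ci)
    also have "\<dots> = (\<Sum>j\<in>UNIV. cinner (v j \<theta>) x *s v j \<theta>)"
    proof (rule sum.cong)
      fix j
      show "(1 / sqrt (p j \<theta>)) *\<^sub>R ((of_real (1 / sqrt (p j \<theta>) * p j \<theta>) * cinner (v j \<theta>) x) *s v j \<theta>)
          = cinner (v j \<theta>) x *s v j \<theta>"
      proof (cases "p j \<theta> = 0")
        case True then show ?thesis using v0 by simp
      next
        case False
        then have "p j \<theta> > 0" using pnn[of j \<theta>] by simp
        then have "1 / sqrt (p j \<theta>) * (1 / sqrt (p j \<theta>) * p j \<theta>) = 1"
          by (simp add: field_simps real_sqrt_mult[symmetric])
        then show ?thesis
          by (simp add: vector_scalar_mult_def vec_eq_iff cscale mult.assoc[symmetric]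
              of_real_mult[symmetric] del: of_real_mult)
      qed
    qed simp
    finally show "(R0 ** R0) *v x = \<rho> *v x" by (simp add: rhov)
  qed
  have psdR0: "psd R0"
  proof -
    have "adj R0 = R0" by (simp add: R0_def adj_sum adj_scaleR adj_outer)
    moreover have "0 \<le> Re (cinner x (R0 *v x))" for x
    proof -
      have "Re (cinner x (R0 *v x)) = (\<Sum>k\<in>UNIV. (1 / sqrt (p k \<theta>)) * Re (cinner (v k \<theta>) x * cinner x (v k \<theta>)))"
        by (simp add: R0v cinner_sum_right cinner_scaleR_right cinner_smult_right)
      also have "\<dots> \<ge> 0"
      proof (rule sum_nonneg)
        fix k
        have "cinner (v k \<theta>) x * cinner x (v k \<theta>) = of_real ((cmod (cinner (v k \<theta>) x))\<^sup>2)"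
          by (metis cnj_cinner complex_norm_square)
        then show "0 \<le> (1 / sqrt (p k \<theta>)) * Re (cinner (v k \<theta>) x * cinner x (v k \<theta>))"
          using pnn[of k \<theta>] by (simp del: of_real_power add: of_real_power[symmetric])
      qed
      finally show ?thesis .
    qed
    ultimately show ?thesis by (simp add: psd_def)
  qed
  have msR: "msqrt \<rho> = R0" by (rule msqrt_eq[OF psdR0 R0R0])
  have rho_nn: "inner y (\<rho> *v y) \<ge> 0" for y
  proof -
    have "inner y (\<rho> *v y) = inner (R0 *v y) (R0 *v y)"
      using hermitian_inner[of R0 y "R0 *v y"] psdR0 R0R0 by (simp add: psd_def matrix_vector_mul_assoc)
    then show ?thesis by simp
  qed
  have Lv: "\<Lambda> l *v v q \<theta> = 2 *\<^sub>R dv l q" if pq: "p q \<theta> > 0" for l q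
  proof -
    define D where "D = (\<Sum>k\<in>UNIV. outer (v k \<theta>) (dv l k) + outer (dv l k) (v k \<theta>))"
    have fe: "(\<lambda>s. channel (\<lambda>k. E k (\<theta> + s *\<^sub>R axis l 1)) (outer \<psi>0 \<psi>0))
        = (\<lambda>s. \<Sum>k\<in>UNIV. outer (v k (\<gamma> l s)) (v k (\<gamma> l s)))"
      using rho by (simp add: P0_def \<gamma>_def)
    have "((\<lambda>s. \<Sum>k\<in>UNIV. outer (v k (\<gamma> l s)) (v k (\<gamma> l s))) has_vector_derivative D) (at 0)"
      unfolding D_def
      apply (rule has_vector_derivative_sum)
      apply (rule has_vector_derivative_eq_rhs)
       apply (rule bounded_bilinear.has_vector_derivative[OF bilinear_outer hasV hasV])
      apply (simp add: \<gamma>0)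
      done
    then have pdD: "pd (\<lambda>t. channel (\<lambda>k. E k t) (outer \<psi>0 \<psi>0)) l \<theta> = D"
      unfolding pd_def fe by (simp add: vector_derivative_at)
    have Dv: "D *v v q \<theta> = cinner (dv l q) (v q \<theta>) *s v q \<theta> + p q \<theta> *\<^sub>R dv l q"
    proof -
      have "D *v v q \<theta> = (\<Sum>k\<in>UNIV. cinner (dv l k) (v q \<theta>) *s v k \<theta> + cinner (v k \<theta>) (v q \<theta>) *s dv l k)"
        by (simp add: D_def sum_mv matrix_vector_mult_add_rdistrib outer_mult_v)
      also have "\<dots> = (\<Sum>k\<in>UNIV. if k = q then cinner (dv l q) (v q \<theta>) *s v q \<theta> + p q \<theta> *\<^sub>R dv l q else 0)"
        by (intro sum.cong) (auto simp: ccv Orth smult_scaleR)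
      finally show ?thesis by simp
    qed
    have rdv: "\<rho> *v dv l q = cinner (v q \<theta>) (dv l q) *s v q \<theta>"
    proof -
      have "\<rho> *v dv l q = (\<Sum>k\<in>UNIV. if k = q then cinner (v q \<theta>) (dv l q) *s v q \<theta> else 0)"
        unfolding rhov by (intro sum.cong) (auto simp: Orth)
      then show ?thesis by simp
    qed
    have rv: "\<rho> *v v q \<theta> = p q \<theta> *\<^sub>R v q \<theta>"
    proof -
      have "\<rho> *v v q \<theta> = (\<Sum>k\<in>UNIV. if k = q then p q \<theta> *\<^sub>R v q \<theta> else 0)"
        unfolding rhov by (intro sum.cong) (auto simp: ccv smult_scaleR)
      then show ?thesis by simp
    qed
    have SL: "D = (1/2) *\<^sub>R (\<rho> ** \<Lambda> l + \<Lambda> l ** \<rho>)" using SLD_eq[of l] pdD rho\<theta> by simp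
    have Dv2: "D *v v q \<theta> = (1/2) *\<^sub>R (\<rho> *v (\<Lambda> l *v v q \<theta>) + p q \<theta> *\<^sub>R (\<Lambda> l *v v q \<theta>))"
      by (simp add: SL scaleR_mv matrix_vector_mult_add_rdistrib matrix_vector_mul_assoc[symmetric] rv mv_scaleR)
    define y where "y = \<Lambda> l *v v q \<theta> - 2 *\<^sub>R dv l q"
    have "\<rho> *v y + p q \<theta> *\<^sub>R y = 0"
    proof -
      have "\<rho> *v y + p q \<theta> *\<^sub>R y = (\<rho> *v (\<Lambda> l *v v q \<theta>) + p q \<theta> *\<^sub>R (\<Lambda> l *v v q \<theta>))
            - 2 *\<^sub>R (\<rho> *v dv l q + p q \<theta> *\<^sub>R dv l q)"
        by (simp add: y_def matrix_vector_mult_diff_distrib mv_scaleR algebra_simps)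
      also have "\<rho> *v (\<Lambda> l *v v q \<theta>) + p q \<theta> *\<^sub>R (\<Lambda> l *v v q \<theta>) = 2 *\<^sub>R (D *v v q \<theta>)"
        using Dv2 by simp
      finally show ?thesis by (simp add: Dv rdv Herm)
    qed
    then have "inner y (\<rho> *v y) = - p q \<theta> * inner y y"
      by (metis add_eq_0_iff2 inner_minus_right inner_scaleR_right mult_minus_left)
    then have "p q \<theta> * inner y y \<le> 0" using rho_nn[of y] by simp
    then have "inner y y \<le> 0" using pq by (simp add: mult_le_0_iff)
    then have "y = 0" by (metis inner_eq_zero_iff inner_ge_zero order_antisym)
    then show ?thesis by (simp add: y_def)
  qed
  have part2: "msqrt (M m) ** \<Lambda> l ** R0 = (2 * c l m) *\<^sub>R (msqrt (M m) ** R0)" for m l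
  proof (rule matrix_eq_on_all)
    fix x
    let ?S = "msqrt (M m)"
    have "(?S ** \<Lambda> l ** R0) *v x = (\<Sum>k\<in>UNIV. (1 / sqrt (p k \<theta>)) *\<^sub>R (cinner (v k \<theta>) x *s (?S *v (\<Lambda> l *v v k \<theta>))))"
      by (simp add: matrix_vector_mul_assoc[symmetric] R0v mv_sum mv_scaleR mv_smult)
    also have "\<dots> = (\<Sum>k\<in>UNIV. (2 * c l m) *\<^sub>R ((1 / sqrt (p k \<theta>)) *\<^sub>R (cinner (v k \<theta>) x *s (?S *v v k \<theta>))))"
    proof (rule sum.cong)
      fix k
      show "(1 / sqrt (p k \<theta>)) *\<^sub>R (cinner (v k \<theta>) x *s (?S *v (\<Lambda> l *v v k \<theta>)))
          = (2 * c l m) *\<^sub>R ((1 / sqrt (p k \<theta>)) *\<^sub>R (cinner (v k \<theta>) x *s (?S *v v k \<theta>)))"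
      proof (cases "p k \<theta> = 0")
        case True then show ?thesis by simp
      next
        case False
        then have "p k \<theta> > 0" using pnn[of k \<theta>] by simp
        then have "?S *v (\<Lambda> l *v v k \<theta>) = (2 * c l m) *\<^sub>R (?S *v v k \<theta>)"
          by (simp add: Lv mv_scaleR Sdv)
        then show ?thesis
          by (simp add: mv_smult smult_scaleR[symmetric] vector_smult_assoc mult.commute vector_scalar_mult_def vec_eq_iff cscale)
      qed
    qed simp
    also have "\<dots> = ((2 * c l m) *\<^sub>R (?S ** R0)) *v x"
      by (simp add: scaleR_mv matrix_vector_mul_assoc[symmetric] R0v mv_sum mv_scaleR mv_smult scaleR_sum_right)
    finally show "(?S ** \<Lambda> l ** R0) *v x = ((2 * c l m) *\<^sub>R (?S ** R0)) *v x" .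
  qed
  show ?thesis
  proof (intro conjI)
    show "\<forall>j k l. p j \<theta> > 0 \<and> p k \<theta> > 0 \<longrightarrow> cinner (pd (w j) l \<theta>) (w k \<theta>) = 0"
      using part1 by blast
    show "\<exists>(M' :: 'o \<Rightarrow> complex ^ 'd ^ 'd) \<xi>. povm M' \<and>
            (\<forall>m j. msqrt (M' m) ** \<Lambda> j ** msqrt (channel (\<lambda>k. E k \<theta>) (outer \<psi>0 \<psi>0))
                 = \<xi> m j *\<^sub>R (msqrt (M' m) ** msqrt (channel (\<lambda>k. E k \<theta>) (outer \<psi>0 \<psi>0))))"
      using M_povm part2 by (intro exI[of _ M] exI[of _ "\<lambda>m l. 2 * c l m"]) (simp add: rho\<theta> msR)
  qed
qed


end
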